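(* Let $\mathbf{L}\in Q^2(\mathbb{D}^2)$. An analytic function $F\colon\mathbb{D}^2\to\mathbb{C}$ has bounded $\mathbf{L}$-index in joint variables if and only if for each $R=(r_1,r_2)\in(0,\beta]\times(0,\beta]$ there exist $n_0\in\mathbb{Z}_+$ and $p_0>0$ such that for every $z^0=(z_1^0,z_2^0)\in\mathbb{D}^2$ there exists $(k_1^0,k_2^0)\in\mathbb{Z}_+^2$ with $0\le k_1^0+k_2^0\le n_0$ and $$\max\left\{\frac{|F^{(k_1,k_2)}(z)|}{k_1!k_2!\,l_1^{k_1}(z)l_2^{k_2}(z)}: k_1+k_2\le n_0,\ z\in\mathbb{D}^2\Big[z^0,\frac{R}{\mathbf{L}(z^0)}\Big]\right\}\le \frac{p_0}{k_1^0!k_2^0!}\,\frac{|F^{(k_1^0,k_2^0)}(z^0)|}{l_1^{k_1^0}(z^0)\,l_2^{k_2^0}(z^0)}.$$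
   Context: $\mathbb{D}^2=\{(z_1,z_2)\in\mathbb{C}^2:|z_1|<1,|z_2|<1\}$, $\mathbb{Z}_+=\{0,1,2,\dots\}$, $\mathbb{R}_+=[0,\infty)$. A constant $\beta>1$ is fixed. $\mathbf{L}(z)=(l_1(z),l_2(z))$, where each $l_j\colon\mathbb{D}^2\to\mathbb{R}_+$ is continuous and satisfies $l_j(z_1,z_2)>\beta/(1-|z_j|)$ for all $(z_1,z_2)\in\mathbb{D}^2$, $j=1,2$. For $z^0\in\mathbb{C}^2$ and $R=(r_1,r_2)\in\mathbb{R}_+^2$: $\mathbb{D}^2[z^0,R]=\{z:|z_j-z_j^0|\le r_j,\ j=1,2\}$ and $\frac{R}{\mathbf{L}(z^0)}=\big(\frac{r_1}{l_1(z^0)},\frac{r_2}{l_2(z^0)}\big)$. $F^{(p,q)}=\frac{\partial^{p+q}F}{\partial z_1^p\partial z_2^q}$. An analytic $F\colon\mathbb{D}^2\to\mathbb{C}$ has bounded $\mathbf{L}$-index in joint variables if there is $n_0\in\mathbb{Z}_+$ such that for all $z\in\mathbb{D}^2$ and all $(p_1,p_2)\in\mathbb{Z}_+^2$: $\frac{|F^{(p_1,p_2)}(z)|}{p_1!p_2!\,l_1^{p_1}(z)l_2^{p_2}(z)}\le\max\{\frac{|F^{(k_1,k_2)}(z)|}{k_1!k_2!\,l_1^{k_1}(z)l_2^{k_2}(z)}:0\le k_1+k_2\le n_0\}$. $Q^2(\mathbb{D}^2)$ is the class of such $\mathbf{L}$ for which, for all $R=(r_1,r_2)\in[0,\beta]^2$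 and $j=1,2$, $0<\lambda_{1,j}(R)\le\lambda_{2,j}(R)<\infty$, where $\lambda_{1,j}(R)=\inf_{z^0\in\mathbb{D}^2}\inf\{l_j(z)/l_j(z^0): z\in\mathbb{D}^2[z^0,R/\mathbf{L}(z^0)]\}$ and $\lambda_{2,j}(R)=\sup_{z^0\in\mathbb{D}^2}\sup\{l_j(z)/l_j(z^0): z\in\mathbb{D}^2[z^0,R/\mathbf{L}(z^0)]\}$. *)

theory Defs
  imports "HOL-Analysis.Analysis"
begin

definition bidisc :: "(complex \<times> complex) set" where
  "bidisc = {z. norm (fst z) < 1 \<and> norm (snd z) < 1}"

definition polydisc :: "complex \<times> complex \<Rightarrow> real \<times> real \<Rightarrow> (complex \<times> complex) set" where
  "polydisc z0 R = {z. norm (fst z - fst z0) \<le> fst R \<and> norm (snd z - snd z0) \<le> snd R}"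

text \<open>Analytic (holomorphic) in two variables on the bidisc: continuous and
  holomorphic in each variable separately (Osgood's characterization).\<close>
definition analytic_bidisc :: "(complex \<times> complex \<Rightarrow> complex) \<Rightarrow> bool" where
  "analytic_bidisc F \<longleftrightarrow> continuous_on bidisc F \<and>
     (\<forall>w. norm w < 1 \<longrightarrow> (\<lambda>u. F (u, w)) holomorphic_on ball 0 1) \<and>
     (\<forall>u. norm u < 1 \<longrightarrow> (\<lambda>w. F (u, w)) holomorphic_on ball 0 1)"

definition pderiv2 :: "(complex \<times> complex \<Rightarrow> complex) \<Rightarrow> nat \<Rightarrow> nat \<Rightarrow> complex \<times> complex \<Rightarrow> complex" where
  "pderiv2 F p q z = (deriv ^^ p) (\<lambda>u. (deriv ^^ q) (\<lambda>w. F (u, w)) (snd z)) (fst z)"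

definition nterm :: "(complex \<times> complex \<Rightarrow> complex) \<Rightarrow> (complex \<times> complex \<Rightarrow> real)
     \<Rightarrow> (complex \<times> complex \<Rightarrow> real) \<Rightarrow> nat \<Rightarrow> nat \<Rightarrow> complex \<times> complex \<Rightarrow> real" where
  "nterm F l1 l2 p q z =
     norm (pderiv2 F p q z) / (fact p * fact q * l1 z ^ p * l2 z ^ q)"

definition admissible_L :: "real \<Rightarrow> (complex \<times> complex \<Rightarrow> real) \<Rightarrow> (complex \<times> complex \<Rightarrow> real) \<Rightarrow> bool" where
  "admissible_L \<beta> l1 l2 \<longleftrightarrow> \<beta> > 1 \<and> continuous_on bidisc l1 \<and> continuous_on bidisc l2 \<and>
     (\<forall>z\<in>bidisc. l1 z > \<beta> / (1 - norm (fst z)) \<and> l2 z > \<beta> / (1 - norm (snd z)))"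

definition bounded_L_index :: "(complex \<times> complex \<Rightarrow> complex) \<Rightarrow> (complex \<times> complex \<Rightarrow> real)
     \<Rightarrow> (complex \<times> complex \<Rightarrow> real) \<Rightarrow> bool" where
  "bounded_L_index F l1 l2 \<longleftrightarrow>
     (\<exists>n0::nat. \<forall>z\<in>bidisc. \<forall>p1 p2.
        nterm F l1 l2 p1 p2 z \<le>
          Max {nterm F l1 l2 k1 k2 z | k1 k2. k1 + k2 \<le> n0})"

text \<open>The class Q^2(D^2): for all R in [0,beta]^2 and j = 1,2,
  0 < lambda_{1,j}(R) and lambda_{2,j}(R) < infinity (lambda_1 \<le> lambda_2 is automatic),
  where lambda_{1,j}, lambda_{2,j} are the inf / sup of l_j(z)/l_j(z0) over z0 in D^2
  and z in D^2 intersected with the polydisc D^2[z0, R/L(z0)].\<close>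
definition Q2 :: "real \<Rightarrow> (complex \<times> complex \<Rightarrow> real) \<Rightarrow> (complex \<times> complex \<Rightarrow> real) \<Rightarrow> bool" where
  "Q2 \<beta> l1 l2 \<longleftrightarrow>
     (\<forall>r1 r2. 0 \<le> r1 \<and> r1 \<le> \<beta> \<and> 0 \<le> r2 \<and> r2 \<le> \<beta> \<longrightarrow>
       (\<forall>l \<in> {l1, l2}.
          (\<exists>c>0. \<forall>z0\<in>bidisc. \<forall>z\<in>bidisc \<inter> polydisc z0 (r1 / l1 z0, r2 / l2 z0). c \<le> l z / l z0) \<and>
          (\<exists>C. \<forall>z0\<in>bidisc. \<forall>z\<in>bidisc \<inter> polydisc z0 (r1 / l1 z0, r2 / l2 z0). l z / l z0 \<le> C)))"

end

theory Submission
  imports Defs "HOL-Complex_Analysis.Complex_Analysis"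
begin


lemma param_cont:
  fixes \<Phi> :: "complex \<Rightarrow> complex \<Rightarrow> complex"
  assumes S: "open S" and cont: "continuous_on (S \<times> sphere c \<rho>) (\<lambda>(x,\<eta>). \<Phi> x \<eta>)" and rho: "0 < \<rho>"
  shows "continuous_on S (\<lambda>x. contour_integral (circlepath c \<rho>) (\<Phi> x))"
  unfolding continuous_on_eq_continuous_at[OF S]
proof
  fix x0 assume x0: "x0 \<in> S"
  obtain s where s: "s>0" "cball x0 s \<subseteq> S" using open_contains_cball x0 S by blast
  have K: "compact (cball x0 s \<times> sphere c \<rho>)" by (simp add: compact_Times)
  have uc: "uniformly_continuous_on (cball x0 s \<times> sphere c \<rho>) (\<lambda>(x,\<eta>). \<Phi> x \<eta>)"
    by (rule compact_uniformly_continuous[OF continuous_on_subset[OF cont] K]) (use s in auto)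
  have ul: "uniform_limit (sphere c \<rho>) \<Phi> (\<Phi> x0) (at x0)"
    unfolding uniform_limit_iff
  proof (intro allI impI)
    fix e::real assume "e>0"
    then obtain d where d: "d>0" and dd: "\<And>a b. a\<in>cball x0 s \<times> sphere c \<rho> \<Longrightarrow> b\<in>cball x0 s \<times> sphere c \<rho> \<Longrightarrow> dist b a < d \<Longrightarrow> dist ((\<lambda>(x,\<eta>). \<Phi> x \<eta>) b) ((\<lambda>(x,\<eta>). \<Phi> x \<eta>) a) < e"
      using uc unfolding uniformly_continuous_on_def by metis
    show "\<forall>\<^sub>F x in at x0. \<forall>\<eta>\<in>sphere c \<rho>. dist (\<Phi> x \<eta>) (\<Phi> x0 \<eta>) < e"
      unfolding eventually_at
    proof (intro exI[of _ "min d s"] conjI allI impI ballI)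
      fix x \<eta> assume x: "x \<noteq> x0 \<and> dist x x0 < min d s" and eta: "\<eta> \<in> sphere c \<rho>"
      have "dist (x, \<eta>) (x0, \<eta>) = dist x x0" by (simp add: dist_Pair_Pair)
      then show "dist (\<Phi> x \<eta>) (\<Phi> x0 \<eta>) < e"
        using dd[of "(x0,\<eta>)" "(x,\<eta>)"] x eta s d by (auto simp: dist_commute)
    qed (use d s in auto)
  qed
  have ci: "\<Phi> x contour_integrable_on circlepath c \<rho>" if "x \<in> S" for x
  proof (rule contour_integrable_continuous_circlepath)
    have "continuous_on (sphere c \<rho>) ((\<lambda>(x,\<eta>). \<Phi> x \<eta>) \<circ> (\<lambda>\<eta>. (x,\<eta>)))"
      by (rule continuous_on_compose, intro continuous_intros, rule continuous_on_subset[OF cont]) (use that in auto)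
    then show "continuous_on (path_image (circlepath c \<rho>)) (\<Phi> x)"
      using rho by (simp add: path_image_circlepath_nonneg o_def)
  qed
  have ev: "\<forall>\<^sub>F x in at x0. \<Phi> x contour_integrable_on circlepath c \<rho>"
    unfolding eventually_at using s by (intro exI[of _ s]) (auto intro!: ci simp: dist_commute)
  show "isCont (\<lambda>x. contour_integral (circlepath c \<rho>) (\<Phi> x)) x0"
    unfolding isCont_def
    by (rule contour_integral_uniform_limit_circlepath(2)[OF ev ul]) (use rho in auto)
qed



lemma circ_vd: "continuous_on {0..1} (\<lambda>t. vector_derivative (circlepath z r) (at t))"
  by (simp add: vector_derivative_circlepath, intro continuous_intros)

lemma param_holo:
  fixes \<Phi> :: "complex \<Rightarrow> complex \<Rightarrow> complex"
  assumes S: "open S" and cont: "continuous_on (S \<times> sphere c \<rho>) (\<lambda>(x,\<eta>). \<Phi> x \<eta>)" and rho: "0 < \<rho>"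
    and hol: "\<And>\<eta>. \<eta> \<in> sphere c \<rho> \<Longrightarrow> (\<lambda>x. \<Phi> x \<eta>) holomorphic_on S"
  shows "(\<lambda>x. contour_integral (circlepath c \<rho>) (\<Phi> x)) holomorphic_on S"
  unfolding holomorphic_on_open[OF S]
proof
  define H where "H = (\<lambda>x. contour_integral (circlepath c \<rho>) (\<Phi> x))"
  fix x0 assume x0: "x0 \<in> S"
  obtain s where s: "s>0" "cball x0 s \<subseteq> S" using open_contains_cball x0 S by blast
  have Hc: "continuous_on S H" unfolding H_def by (rule param_cont[OF S cont rho])
  have pic: "path_image (circlepath x0 s) = sphere x0 s" using s by (simp add: path_image_circlepath_nonneg)
  have pig: "path_image (circlepath c \<rho>) = sphere c \<rho>" using rho by (simp add: path_image_circlepath_nonneg)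
  have sphS: "sphere x0 s \<subseteq> S" using s by auto
  have ci: "\<Phi> x contour_integrable_on circlepath c \<rho>" if "x \<in> S" for x
  proof (rule contour_integrable_continuous_circlepath)
    have "continuous_on (sphere c \<rho>) ((\<lambda>(x,\<eta>). \<Phi> x \<eta>) \<circ> (\<lambda>\<eta>. (x,\<eta>)))"
      by (rule continuous_on_compose, intro continuous_intros, rule continuous_on_subset[OF cont]) (use that in auto)
    then show "continuous_on (path_image (circlepath c \<rho>)) (\<Phi> x)"
      using rho by (simp add: path_image_circlepath_nonneg o_def)
  qed
  have cH: "continuous_on (sphere x0 s) (\<lambda>\<xi>. H \<xi> / (\<xi> - x))" if "x \<in> ball x0 s" for x
    using that by (intro continuous_intros continuous_on_subset[OF Hc sphS]) (auto simp: dist_norm)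
  define g where "g = (\<lambda>x. contour_integral (circlepath x0 s) (\<lambda>\<xi>. H \<xi> / (\<xi> - x)))"
  have eq: "H x = g x / (2 * complex_of_real pi * \<i>)" if x: "x \<in> ball x0 s" for x
  proof -
    have cauchy: "contour_integral (circlepath x0 s) (\<lambda>\<xi>. \<Phi> \<xi> \<eta> / (\<xi> - x)) = 2 * complex_of_real pi * \<i> * \<Phi> x \<eta>"
      if eta: "\<eta> \<in> sphere c \<rho>" for \<eta>
    proof (rule contour_integral_unique, rule Cauchy_integral_circlepath)
      show "continuous_on (cball x0 s) (\<lambda>\<xi>. \<Phi> \<xi> \<eta>)"
        using holomorphic_on_imp_continuous_on[OF hol[OF eta]] s continuous_on_subset by blast
      show "(\<lambda>\<xi>. \<Phi> \<xi> \<eta>) holomorphic_on ball x0 s"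
        using hol[OF eta] s by (meson ball_subset_cball holomorphic_on_subset order_trans)
      show "cmod (x - x0) < s" using x by (simp add: dist_norm norm_minus_commute)
    qed
    have "2 * complex_of_real pi * \<i> * H x = contour_integral (circlepath c \<rho>) (\<lambda>\<eta>. 2 * complex_of_real pi * \<i> * \<Phi> x \<eta>)"
    proof -
      have "x \<in> S" using x s by auto
      then show ?thesis unfolding H_def using ci[of x] by (subst contour_integral_lmul) auto
    qed
    also have "\<dots> = contour_integral (circlepath c \<rho>) (\<lambda>\<eta>. contour_integral (circlepath x0 s) (\<lambda>\<xi>. \<Phi> \<xi> \<eta> / (\<xi> - x)))"
      proof (rule contour_integral_cong)
      fix \<eta> assume "\<eta> \<in> path_image (circlepath c \<rho>)"
      then have "\<eta> \<in> sphere c \<rho>" using pig by blast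
      then show "2 * complex_of_real pi * \<i> * \<Phi> x \<eta> = contour_integral (circlepath x0 s) (\<lambda>\<xi>. \<Phi> \<xi> \<eta> / (\<xi> - x))"
        using cauchy by simp
    qed simp
    also have "\<dots> = contour_integral (circlepath x0 s) (\<lambda>\<xi>. contour_integral (circlepath c \<rho>) (\<lambda>\<eta>. \<Phi> \<xi> \<eta> / (\<xi> - x)))"
    proof (rule contour_integral_swap[symmetric, where f = "\<lambda>\<xi> \<eta>. \<Phi> \<xi> \<eta> / (\<xi> - x)"])
      have "continuous_on (sphere x0 s \<times> sphere c \<rho>) (\<lambda>p. (\<lambda>(x,\<eta>). \<Phi> x \<eta>) p / (fst p - x))"
        using x sphS by (intro continuous_intros continuous_on_subset[OF cont]) (auto simp: dist_norm)
      then show "continuous_on (path_image (circlepath x0 s) \<times> path_image (circlepath c \<rho>)) (\<lambda>(y1, y2). \<Phi> y1 y2 / (y1 - x))"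
        using s rho by (simp add: case_prod_unfold)
    qed (auto simp: circ_vd)
    also have "\<dots> = g x"
      unfolding g_def H_def
      by (rule contour_integral_cong) (use sphS ci s in \<open>auto simp: subset_iff intro!: contour_integral_div\<close>)
    finally show ?thesis by (simp add: field_simps)
  qed
  have int: "((\<lambda>\<xi>. H \<xi> / (\<xi> - x)^1) has_contour_integral g x) (circlepath x0 s)" if "x \<in> ball x0 s" for x
    unfolding g_def using cH[OF that] s
    by (auto intro!: has_contour_integral_integral contour_integrable_continuous_circlepath simp: pic)
  obtain g' where "(g has_field_derivative g') (at x0)"
    using Cauchy_next_derivative_circlepath(2)[where z=x0 and r=s and f=H and g=g and k=1 and w=x0] int continuous_on_subset[OF Hc sphS] s
    by (auto simp: pic)
  then have "((\<lambda>x. g x / (2 * complex_of_real pi * \<i>)) has_field_derivative g' / (2 * complex_of_real pi * \<i>)) (at x0)"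
    by (auto intro!: derivative_eq_intros)
  then have "(H has_field_derivative g' / (2 * complex_of_real pi * \<i>)) (at x0)"
    by (rule has_field_derivative_transform_within_open[where S = "ball x0 s"]) (use s eq in auto)
  then show "\<exists>f'. (H has_field_derivative f') (at x0)" by blast
qed



lemma bidisc_eq: "bidisc = ball 0 1 \<times> ball 0 1"
  by (auto simp: bidisc_def)

lemma mem_bidisc[simp]: "(u, w) \<in> bidisc \<longleftrightarrow> cmod u < 1 \<and> cmod w < 1"
  by (simp add: bidisc_def)

lemma analytic_contF: "analytic_bidisc F \<Longrightarrow> A \<subseteq> ball 0 1 \<Longrightarrow> B \<subseteq> ball 0 1 \<Longrightarrow>
   continuous_on (A \<times> B) (\<lambda>(x,y). F (x,y))"
proof -
  assume a: "analytic_bidisc F" "A \<subseteq> ball 0 1" "B \<subseteq> ball 0 1"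
  have "(\<lambda>(x,y). F (x,y)) = F" by auto
  moreover have "A \<times> B \<subseteq> bidisc" using a(2,3) unfolding bidisc_eq by auto
  ultimately show ?thesis using a(1) unfolding analytic_bidisc_def using continuous_on_subset by metis
qed

lemma analytic_swap:
  assumes "analytic_bidisc F"
  shows "analytic_bidisc (\<lambda>z. F (snd z, fst z))"
proof -
  have c: "continuous_on bidisc (\<lambda>z::complex\<times>complex. (snd z, fst z))" by (intro continuous_intros)
  have i: "(\<lambda>z. (snd z, fst z)) ` bidisc \<subseteq> bidisc" by (auto simp: bidisc_def)
  have "continuous_on bidisc (\<lambda>z. F (snd z, fst z))"
    using assms unfolding analytic_bidisc_def using continuous_on_compose2[OF _ c i, of F] by blast
  then show ?thesis using assms unfolding analytic_bidisc_def by simp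
qed

lemma cball_sub: "cmod w < 1 \<Longrightarrow> cball w ((1 - cmod w)/2) \<subseteq> ball 0 1"
proof
  fix x assume "cmod w < 1" "x \<in> cball w ((1 - cmod w)/2)"
  then have "cmod (x - w) \<le> (1 - cmod w)/2" by (simp add: dist_norm norm_minus_commute)
  moreover have "cmod x \<le> cmod w + cmod (x - w)" by (metis add.commute diff_add_cancel norm_triangle_ineq)
  ultimately show "x \<in> ball 0 1" using \<open>cmod w < 1\<close> by simp
qed

lemma holo_G:
  assumes F: "analytic_bidisc F" and w: "cmod w < 1"
  shows "(\<lambda>x. (deriv ^^ q) (\<lambda>y. F (x, y)) w) holomorphic_on ball 0 1"
proof -
  define \<rho> where "\<rho> = (1 - cmod w)/2"
  have rho: "\<rho> > 0" using w by (simp add: \<rho>_def)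
  have cb: "cball w \<rho> \<subseteq> ball 0 1" unfolding \<rho>_def by (rule cball_sub[OF w])
  have holy: "(\<lambda>y. F (x, y)) holomorphic_on ball 0 1" if "cmod x < 1" for x
    using F that unfolding analytic_bidisc_def by auto
  have holx: "(\<lambda>x. F (x, y)) holomorphic_on ball 0 1" if "cmod y < 1" for y
    using F that unfolding analytic_bidisc_def by auto
  have eq: "fact q / (2 * complex_of_real pi * \<i>) * contour_integral (circlepath w \<rho>) (\<lambda>\<eta>. F (x, \<eta>) / (\<eta> - w) ^ Suc q)
     = (deriv ^^ q) (\<lambda>y. F (x, y)) w" if x: "x \<in> ball 0 1" for x
  proof -
    have "(deriv ^^ q) (\<lambda>y. F (x, y)) w = fact q / (2 * pi * \<i>) * contour_integral (circlepath w \<rho>) (\<lambda>\<eta>. F (x, \<eta>) / (\<eta> - w) ^ Suc q)"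
    proof (rule Cauchy_higher_derivative_integral_circlepath(2))
      show "continuous_on (cball w \<rho>) (\<lambda>y. F (x, y))"
        using continuous_on_subset[OF holomorphic_on_imp_continuous_on[OF holy] cb] x by simp
      show "(\<lambda>y. F (x, y)) holomorphic_on ball w \<rho>"
        using holy x cb by (meson ball_subset_cball holomorphic_on_subset order_trans mem_ball_0)
      show "w \<in> ball w \<rho>" using rho by simp
    qed
    then show ?thesis by simp
  qed
  have sph: "sphere w \<rho> \<subseteq> ball 0 1" using cb by auto
  have "(\<lambda>x. fact q / (2 * complex_of_real pi * \<i>) * contour_integral (circlepath w \<rho>) (\<lambda>\<eta>. F (x, \<eta>) / (\<eta> - w) ^ Suc q)) holomorphic_on ball 0 1"
  proof (rule holomorphic_on_mult[OF holomorphic_on_const])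
    have c1: "continuous_on (ball 0 1 \<times> sphere w \<rho>) (\<lambda>(x,y). F (x,y))" by (rule analytic_contF[OF F _ sph]) simp
    have c2: "continuous_on (ball 0 1 \<times> sphere w \<rho>) (\<lambda>p. (snd p - w) ^ Suc q)" by (intro continuous_intros)
    have "continuous_on (ball 0 1 \<times> sphere w \<rho>) (\<lambda>p. (\<lambda>(x,y). F (x,y)) p / (snd p - w) ^ Suc q)"
      by (rule continuous_on_divide[OF c1 c2]) (use rho in auto)
    then have c: "continuous_on (ball 0 1 \<times> sphere w \<rho>) (\<lambda>(x,\<eta>). F (x, \<eta>) / (\<eta> - w) ^ Suc q)"
      by (simp add: case_prod_unfold)
    have h: "(\<lambda>x. F (x, \<eta>) / (\<eta> - w) ^ Suc q) holomorphic_on ball 0 1" if "\<eta> \<in> sphere w \<rho>" for \<eta>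
    proof -
      have "cmod \<eta> < 1" using that sph by auto
      then show ?thesis by (rule holomorphic_on_divide[OF holx holomorphic_on_const]) (use that rho in auto)
    qed
    show "(\<lambda>x. contour_integral (circlepath w \<rho>) (\<lambda>\<eta>. F (x, \<eta>) / (\<eta> - w) ^ Suc q)) holomorphic_on ball 0 1"
      by (rule param_holo[where \<Phi> = "\<lambda>x \<eta>. F (x, \<eta>) / (\<eta> - w) ^ Suc q", OF _ c rho h]) auto
  qed
  then show ?thesis by (rule holomorphic_transform) (rule eq)
qed



lemma contK:
  assumes F: "analytic_bidisc F" and A: "A \<subseteq> ball 0 1" "u \<notin> A" and B: "B \<subseteq> ball 0 1" "w \<notin> B"
  shows "continuous_on (A \<times> B) (\<lambda>(\<xi>,\<eta>). F (\<xi>,\<eta>) / ((\<xi> - u)^Suc p * (\<eta> - w)^Suc q))"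
proof -
  have c1: "continuous_on (A \<times> B) (\<lambda>(x,y). F (x,y))" by (rule analytic_contF[OF F A(1) B(1)])
  have c2: "continuous_on (A \<times> B) (\<lambda>z. (fst z - u)^Suc p * (snd z - w)^Suc q)" by (intro continuous_intros)
  have "continuous_on (A \<times> B) (\<lambda>z. (\<lambda>(x,y). F (x,y)) z / ((fst z - u)^Suc p * (snd z - w)^Suc q))"
    by (rule continuous_on_divide[OF c1 c2]) (use A B in auto)
  then show ?thesis by (simp add: case_prod_unfold)
qed

lemma pic_circ: "0 < r \<Longrightarrow> path_image (circlepath z r) = sphere z r"
  by (simp add: path_image_circlepath_nonneg)

lemma dbl:
  assumes F: "analytic_bidisc F" and w: "cmod w < 1"
    and r1: "\<rho>1 > 0" "cball u \<rho>1 \<subseteq> ball 0 1" and r2: "\<rho>2 > 0" "cball w \<rho>2 \<subseteq> ball 0 1"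
  shows "pderiv2 F p q (u,w) = fact p * fact q / (2 * complex_of_real pi * \<i>)^2 *
    contour_integral (circlepath u \<rho>1) (\<lambda>\<xi>. contour_integral (circlepath w \<rho>2) (\<lambda>\<eta>. F (\<xi>,\<eta>) / ((\<xi> - u)^Suc p * (\<eta> - w)^Suc q)))"
proof -
  define c where "c = 2 * complex_of_real pi * \<i>"
  define G where "G = (\<lambda>x. (deriv ^^ q) (\<lambda>y. F (x, y)) w)"
  define I where "I = (\<lambda>\<xi>. contour_integral (circlepath w \<rho>2) (\<lambda>\<eta>. F (\<xi>,\<eta>) / ((\<xi> - u)^Suc p * (\<eta> - w)^Suc q)))"
  have c0: "c \<noteq> 0" by (simp add: c_def)
  have hG: "G holomorphic_on ball 0 1" unfolding G_def by (rule holo_G[OF F w])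
  have holy: "(\<lambda>y. F (x, y)) holomorphic_on ball 0 1" if "cmod x < 1" for x
    using F that unfolding analytic_bidisc_def by auto
  have "pderiv2 F p q (u,w) = (deriv ^^ p) G u" by (simp add: pderiv2_def G_def)
  also have "\<dots> = fact p / (2 * pi * \<i>) * contour_integral (circlepath u \<rho>1) (\<lambda>\<xi>. G \<xi> / (\<xi> - u)^Suc p)"
  proof (rule Cauchy_higher_derivative_integral_circlepath(2))
    show "continuous_on (cball u \<rho>1) G"
      using continuous_on_subset[OF holomorphic_on_imp_continuous_on[OF hG] r1(2)] .
    show "G holomorphic_on ball u \<rho>1"
      using holomorphic_on_subset[OF hG] r1(2) ball_subset_cball by blast
    show "u \<in> ball u \<rho>1" using r1 by simp
  qed
  also have "\<dots> = fact p / c * contour_integral (circlepath u \<rho>1) (\<lambda>\<xi>. G \<xi> / (\<xi> - u)^Suc p)"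
    by (simp add: c_def)
  also have "contour_integral (circlepath u \<rho>1) (\<lambda>\<xi>. G \<xi> / (\<xi> - u)^Suc p)
     = contour_integral (circlepath u \<rho>1) (\<lambda>\<xi>. fact q / c * I \<xi>)"
  proof (rule contour_integral_cong)
    fix \<xi> assume "\<xi> \<in> path_image (circlepath u \<rho>1)"
    then have xs: "\<xi> \<in> sphere u \<rho>1" using pic_circ[OF r1(1)] by blast
    then have xb: "cmod \<xi> < 1" and xu: "\<xi> \<noteq> u" using r1 by auto
    have cc: "continuous_on (cball w \<rho>2) (\<lambda>y. F (\<xi>, y))"
      using continuous_on_subset[OF holomorphic_on_imp_continuous_on[OF holy[OF xb]] r2(2)] .
    have hh: "(\<lambda>y. F (\<xi>, y)) holomorphic_on ball w \<rho>2"
      using holomorphic_on_subset[OF holy[OF xb]] r2(2) ball_subset_cball by blast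
    have ww: "w \<in> ball w \<rho>2" using r2 by simp
    have G1: "G \<xi> = fact q / c * contour_integral (circlepath w \<rho>2) (\<lambda>\<eta>. F (\<xi>,\<eta>) / (\<eta> - w)^Suc q)"
      unfolding G_def c_def using Cauchy_higher_derivative_integral_circlepath(2)[OF cc hh ww] by simp
    have int: "(\<lambda>\<eta>. F (\<xi>,\<eta>) / (\<eta> - w)^Suc q) contour_integrable_on circlepath w \<rho>2"
      by (rule Cauchy_higher_derivative_integral_circlepath(1)[OF cc hh ww])
    have "I \<xi> = contour_integral (circlepath w \<rho>2) (\<lambda>\<eta>. F (\<xi>,\<eta>) / (\<eta> - w)^Suc q / (\<xi> - u)^Suc p)"
      unfolding I_def by (rule contour_integral_cong) (simp_all add: mult.commute)
    also have "\<dots> = contour_integral (circlepath w \<rho>2) (\<lambda>\<eta>. F (\<xi>,\<eta>) / (\<eta> - w)^Suc q) / (\<xi> - u)^Suc p"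
      by (rule contour_integral_div[OF int])
    finally show "G \<xi> / (\<xi> - u)^Suc p = fact q / c * I \<xi>" using G1 by simp
  qed simp
  also have "\<dots> = fact q / c * contour_integral (circlepath u \<rho>1) I"
  proof (rule contour_integral_lmul)
    have S: "open (ball 0 1 - {u})" by auto
    have cI: "continuous_on (ball 0 1 - {u}) I"
      unfolding I_def
      by (rule param_cont[OF S _ r2(1)], rule contK[OF F]) (use r2 in auto)
    have "sphere u \<rho>1 \<subseteq> ball 0 1 - {u}" using r1 by auto
    then have "continuous_on (path_image (circlepath u \<rho>1)) I"
      unfolding pic_circ[OF r1(1)] by (rule continuous_on_subset[OF cI])
    then show "I contour_integrable_on circlepath u \<rho>1"
      by (rule contour_integrable_continuous_circlepath)
  qed
  finally show ?thesis by (simp add: c_def[symmetric] I_def power2_eq_square)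
qed

lemma comm:
  assumes F: "analytic_bidisc F" and u: "cmod u < 1" and w: "cmod w < 1"
  shows "pderiv2 F p q (u,w) = pderiv2 (\<lambda>z. F (snd z, fst z)) q p (w,u)"
proof -
  define \<rho>1 where "\<rho>1 = (1 - cmod u)/2"
  define \<rho>2 where "\<rho>2 = (1 - cmod w)/2"
  have r1: "\<rho>1 > 0" "cball u \<rho>1 \<subseteq> ball 0 1" using u cball_sub[OF u] by (auto simp: \<rho>1_def)
  have r2: "\<rho>2 > 0" "cball w \<rho>2 \<subseteq> ball 0 1" using w cball_sub[OF w] by (auto simp: \<rho>2_def)
  have e1: "pderiv2 F p q (u,w) = fact p * fact q / (2 * complex_of_real pi * \<i>)^2 *
    contour_integral (circlepath u \<rho>1) (\<lambda>\<xi>. contour_integral (circlepath w \<rho>2) (\<lambda>\<eta>. F (\<xi>,\<eta>) / ((\<xi> - u)^Suc p * (\<eta> - w)^Suc q)))"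
    by (rule dbl[OF F w r1 r2])
  have e2: "pderiv2 (\<lambda>z. F (snd z, fst z)) q p (w,u) = fact q * fact p / (2 * complex_of_real pi * \<i>)^2 *
    contour_integral (circlepath w \<rho>2) (\<lambda>\<eta>. contour_integral (circlepath u \<rho>1) (\<lambda>\<xi>. F (\<xi>,\<eta>) / ((\<eta> - w)^Suc q * (\<xi> - u)^Suc p)))"
    using dbl[OF analytic_swap[OF F] u r2 r1, of q p] by simp
  have sw: "contour_integral (circlepath u \<rho>1) (\<lambda>\<xi>. contour_integral (circlepath w \<rho>2) (\<lambda>\<eta>. F (\<xi>,\<eta>) / ((\<xi> - u)^Suc p * (\<eta> - w)^Suc q)))
    = contour_integral (circlepath w \<rho>2) (\<lambda>\<eta>. contour_integral (circlepath u \<rho>1) (\<lambda>\<xi>. F (\<xi>,\<eta>) / ((\<xi> - u)^Suc p * (\<eta> - w)^Suc q)))"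
  proof (rule contour_integral_swap[where f = "\<lambda>\<xi> \<eta>. F (\<xi>,\<eta>) / ((\<xi> - u)^Suc p * (\<eta> - w)^Suc q)"])
    show "continuous_on (path_image (circlepath u \<rho>1) \<times> path_image (circlepath w \<rho>2))
      (\<lambda>(\<xi>,\<eta>). F (\<xi>,\<eta>) / ((\<xi> - u)^Suc p * (\<eta> - w)^Suc q))"
      unfolding pic_circ[OF r1(1)] pic_circ[OF r2(1)]
      by (rule contK[OF F]) (use r1 r2 in auto)
  qed (simp_all add: circ_vd)
  show ?thesis using e1 e2 sw by (simp add: mult.commute)
qed



lemma taylor_u:
  assumes F: "analytic_bidisc F" and u: "cmod u < 1" and w: "cmod w < 1" and u': "cmod (u' - u) < 1 - cmod u"
  shows "(\<lambda>j. pderiv2 F (k+j) m (u,w) / fact j * (u' - u)^j) sums pderiv2 F k m (u',w)"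
proof -
  define G where "G = (\<lambda>x. (deriv ^^ m) (\<lambda>y. F (x, y)) w)"
  have hG: "G holomorphic_on ball 0 1" unfolding G_def by (rule holo_G[OF F w])
  have hH: "(deriv ^^ k) G holomorphic_on ball 0 1" by (rule holomorphic_higher_deriv[OF hG]) simp
  have sub: "ball u (1 - cmod u) \<subseteq> ball 0 1"
  proof
    fix x assume "x \<in> ball u (1 - cmod u)"
    then have "cmod (x - u) < 1 - cmod u" by (simp add: dist_norm norm_minus_commute)
    moreover have "cmod x \<le> cmod u + cmod (x - u)" by (metis add.commute diff_add_cancel norm_triangle_ineq)
    ultimately show "x \<in> ball 0 1" by simp
  qed
  have "u' \<in> ball u (1 - cmod u)" using u' by (simp add: dist_norm norm_minus_commute)
  then have "(\<lambda>n. (deriv ^^ n) ((deriv ^^ k) G) u / fact n * (u' - u)^n) sums (deriv ^^ k) G u'"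
    by (rule holomorphic_power_series[OF holomorphic_on_subset[OF hH sub]])
  moreover have "(deriv ^^ n) ((deriv ^^ k) G) = (deriv ^^ (k+n)) G" for n
    by (simp only: add.commute[of k n] funpow_add o_apply)
  ultimately show ?thesis by (simp add: pderiv2_def G_def)
qed

lemma taylor_w:
  assumes F: "analytic_bidisc F" and u: "cmod u < 1" and w: "cmod w < 1" and w': "cmod (w' - w) < 1 - cmod w"
  shows "(\<lambda>j. pderiv2 F k (m+j) (u,w) / fact j * (w' - w)^j) sums pderiv2 F k m (u,w')"
proof -
  have w1: "cmod w' < 1"
  proof -
    have "cmod w' \<le> cmod w + cmod (w' - w)" by (metis add.commute diff_add_cancel norm_triangle_ineq)
    then show ?thesis using w' by simp
  qed
  have "(\<lambda>j. pderiv2 (\<lambda>z. F (snd z, fst z)) (m+j) k (w,u) / fact j * (w' - w)^j) sums pderiv2 (\<lambda>z. F (snd z, fst z)) m k (w',u)"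
    by (rule taylor_u[OF analytic_swap[OF F] w u w'])
  then show ?thesis using comm[OF F u w] comm[OF F u w1] by simp
qed

lemma taylor_bound:
  fixes a :: "nat \<Rightarrow> complex"
  assumes S: "a sums S" and b: "\<And>j. norm (a j) \<le> fact (k+j) / fact j * B * L^(k+j) * d^j"
    and d: "0 \<le> d" "4*L*d \<le> 1" and L: "0 < L" and B: "0 \<le> B"
  shows "norm S \<le> fact k * B * L^k * 2^(k+1)"
proof -
  define A where "A = fact k * B * L^k * 2^k"
  have A0: "A \<ge> 0" using B L by (simp add: A_def)
  have ab: "norm (a j) \<le> A * (1/2)^j" for j
  proof -
    have f: "fact (k+j) / fact j = (fact k * real ((k+j) choose j) :: real)"
      using binomial_fact[of j "k+j", where 'a=real] by (simp add: field_simps)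
    have ch: "real ((k+j) choose j) \<le> 2^(k+j)"
      using binomial_le_pow2[of "k+j" j] by (metis of_nat_le_iff of_nat_numeral of_nat_power)
    have ld: "L^(k+j) * d^j = L^k * (L*d)^j" by (simp add: power_add power_mult_distrib)
    have ld2: "(L*d)^j \<le> (1/4)^j" using d L by (intro power_mono) (auto simp: field_simps)
    have "norm (a j) \<le> fact k * real ((k+j) choose j) * B * (L^k * (L*d)^j)"
    proof -
      have "norm (a j) \<le> fact k * real ((k+j) choose j) * B * (L^(k+j) * d^j)"
        using b[of j] unfolding f by (simp add: mult.assoc)
      then show ?thesis unfolding ld .
    qed
    also have "\<dots> \<le> fact k * 2^(k+j) * B * (L^k * (1/4)^j)"
      using ch ld2 B L d by (intro mult_mono mult_left_mono) auto
    also have "\<dots> = A * (1/2)^j"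
    proof -
      have "(2::real)^j * 2^j = 4^j" by (metis power_mult_distrib num_double numeral_times_numeral)
      then show ?thesis by (simp add: A_def power_add field_simps power_divide)
    qed
    finally show ?thesis .
  qed
  have sg: "summable (\<lambda>j. A * (1/2::real)^j)" by (intro summable_mult summable_geometric) simp
  have sn: "summable (\<lambda>j. norm (a j))" by (rule summable_comparison_test[OF _ sg]) (use ab in auto)
  have "norm S = norm (suminf a)" using S by (simp add: sums_iff)
  also have "\<dots> \<le> (\<Sum>j. norm (a j))" by (rule summable_norm[OF sn])
  also have "\<dots> \<le> (\<Sum>j. A * (1/2)^j)" by (rule suminf_le[OF ab sn sg])
  also have "\<dots> = A * 2" by (simp add: suminf_mult suminf_geometric)
  finally show ?thesis by (simp add: A_def)
qed



definition MaxN :: "(nat \<Rightarrow> nat \<Rightarrow> real) \<Rightarrow> nat \<Rightarrow> real" where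
  "MaxN f N = Max {f k1 k2 | k1 k2. k1 + k2 \<le> N}"

lemma maxN_fin: "finite {f k1 k2 | k1 k2. k1 + k2 \<le> (N::nat)}"
proof -
  have "{f k1 k2 | k1 k2. k1 + k2 \<le> N} \<subseteq> (\<lambda>p. f (fst p) (snd p)) ` ({..N} \<times> {..N})"
  proof
    fix x assume "x \<in> {f k1 k2 | k1 k2. k1 + k2 \<le> N}"
    then obtain k1 k2 where x: "x = f k1 k2" "k1 + k2 \<le> N" by blast
    then have "(k1, k2) \<in> {..N} \<times> {..N}" by simp
    then show "x \<in> (\<lambda>p. f (fst p) (snd p)) ` ({..N} \<times> {..N})" unfolding x(1) by (rule rev_image_eqI) simp
  qed
  then show ?thesis by (rule finite_subset) simp
qed

lemma maxN_mem: "k1 + k2 \<le> N \<Longrightarrow> f k1 k2 \<in> {f k1 k2 | k1 k2. k1 + k2 \<le> N}"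
  by blast

lemma maxN_ge: "k1 + k2 \<le> N \<Longrightarrow> f k1 k2 \<le> MaxN f N"
  unfolding MaxN_def by (rule Max_ge[OF maxN_fin maxN_mem])

lemma maxN_in: "\<exists>k1 k2. k1 + k2 \<le> N \<and> MaxN f N = f k1 k2"
proof -
  have "MaxN f N \<in> {f k1 k2 | k1 k2. k1 + k2 \<le> N}"
    unfolding MaxN_def by (rule Max_in[OF maxN_fin]) (use maxN_mem[of 0 0 N f] in auto)
  then show ?thesis by blast
qed

lemma cauchy2:
  assumes F: "analytic_bidisc F" and r1: "\<rho>1 > 0" "cball a \<rho>1 \<subseteq> ball 0 1"
    and r2: "\<rho>2 > 0" "cball b \<rho>2 \<subseteq> ball 0 1"
    and V: "\<And>\<xi> \<eta>. cmod (\<xi> - a) = \<rho>1 \<Longrightarrow> cmod (\<eta> - b) = \<rho>2 \<Longrightarrow> cmod (F (\<xi>, \<eta>)) \<le> V"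
  shows "cmod (pderiv2 F p q (a,b)) \<le> fact p * fact q * V / (\<rho>1^p * \<rho>2^q)"
proof -
  have b: "cmod b < 1" using subsetD[OF r2(2), of b] r2(1) by simp
  define G where "G = (\<lambda>x. (deriv ^^ q) (\<lambda>y. F (x, y)) b)"
  have hG: "G holomorphic_on ball 0 1" unfolding G_def by (rule holo_G[OF F b])
  have holy: "(\<lambda>y. F (x, y)) holomorphic_on ball 0 1" if "cmod x < 1" for x
    using F that unfolding analytic_bidisc_def by auto
  have Gb: "cmod (G \<xi>) \<le> fact q * V / \<rho>2^q" if "cmod (a - \<xi>) = \<rho>1" for \<xi>
  proof -
    have "\<xi> \<in> cball a \<rho>1" using that by (simp add: dist_norm)
    then have xb: "cmod \<xi> < 1" using r1 by auto
    show ?thesis unfolding G_def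
    proof (rule Cauchy_inequality)
      show "(\<lambda>y. F (\<xi>, y)) holomorphic_on ball b \<rho>2"
        using holomorphic_on_subset[OF holy[OF xb]] r2(2) ball_subset_cball by blast
      show "continuous_on (cball b \<rho>2) (\<lambda>y. F (\<xi>, y))"
        using continuous_on_subset[OF holomorphic_on_imp_continuous_on[OF holy[OF xb]] r2(2)] .
      show "0 < \<rho>2" by fact
      fix y assume "cmod (b - y) = \<rho>2"
      then show "cmod (F (\<xi>, y)) \<le> V" using V[of \<xi> y] that by (simp add: norm_minus_commute)
    qed
  qed
  have A: "cmod ((deriv ^^ p) G a) \<le> fact p * (fact q * V / \<rho>2^q) / \<rho>1^p"
  proof (rule Cauchy_inequality)
    show "G holomorphic_on ball a \<rho>1"
      using holomorphic_on_subset[OF hG] r1(2) ball_subset_cball by blast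
    show "continuous_on (cball a \<rho>1) G"
      using continuous_on_subset[OF holomorphic_on_imp_continuous_on[OF hG] r1(2)] .
    show "0 < \<rho>1" by fact
    fix x assume "cmod (a - x) = \<rho>1"
    then show "cmod (G x) \<le> fact q * V / \<rho>2^q" by (rule Gb)
  qed
  moreover have B: "pderiv2 F p q (a,b) = (deriv ^^ p) G a" by (simp add: pderiv2_def G_def)
  moreover have C: "fact p * (fact q * V / \<rho>2^q) / \<rho>1^p = fact p * fact q * V / (\<rho>1^p * \<rho>2^q)"
    by (simp only: times_divide_eq_right divide_divide_eq_left mult.commute mult.assoc mult.left_commute)
  ultimately show ?thesis by (simp only: B C)
qed

lemma step_core:
  fixes X :: complex
  assumes X: "cmod X \<le> fact k1 * fact k2 * L1^k1 * L2^k2 * M * 2^(N+1)"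
    and l1: "L1 \<le> \<Lambda> * l1'" and l2: "L2 \<le> \<Lambda> * l2'" and pos: "0 < l1'" "0 < l2'" "0 < L1" "0 < L2"
    and La: "1 \<le> \<Lambda>" and k: "k1 + k2 \<le> N" and M: "0 \<le> M"
  shows "cmod X / (fact k1 * fact k2 * l1'^k1 * l2'^k2) \<le> 2^(N+1) * \<Lambda>^N * M"
proof -
  have p1: "L1^k1 \<le> \<Lambda>^k1 * l1'^k1"
    using power_mono[OF l1, of k1] pos by (simp add: power_mult_distrib)
  have p2: "L2^k2 \<le> \<Lambda>^k2 * l2'^k2"
    using power_mono[OF l2, of k2] pos by (simp add: power_mult_distrib)
  have pN: "\<Lambda>^(k1+k2) \<le> \<Lambda>^N" by (rule power_increasing[OF k La])
  have D: "0 < fact k1 * fact k2 * l1'^k1 * l2'^k2" using pos by simp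
  have "cmod X \<le> fact k1 * fact k2 * (\<Lambda>^k1 * l1'^k1) * (\<Lambda>^k2 * l2'^k2) * M * 2^(N+1)"
  proof -
    have pp: "L1^k1 * L2^k2 \<le> (\<Lambda>^k1 * l1'^k1) * (\<Lambda>^k2 * l2'^k2)"
      proof (rule mult_mono[OF p1 p2])
      have "0 \<le> \<Lambda>" using La by linarith
      then show "0 \<le> \<Lambda> ^ k1 * l1' ^ k1" using pos by simp
      show "0 \<le> L2 ^ k2" using pos by simp
    qed
    have "fact k1 * fact k2 * L1^k1 * L2^k2 * M * 2^(N+1) = (fact k1*fact k2) * (L1^k1*L2^k2) * (M*2^(N+1))"
      by (simp add: mult_ac)
    also have "\<dots> \<le> (fact k1*fact k2) * ((\<Lambda>^k1 * l1'^k1) * (\<Lambda>^k2 * l2'^k2)) * (M*2^(N+1))"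
      using pp M by (intro mult_right_mono mult_left_mono) auto
    also have "\<dots> = fact k1 * fact k2 * (\<Lambda>^k1 * l1'^k1) * (\<Lambda>^k2 * l2'^k2) * M * 2^(N+1)"
      by (simp add: mult_ac)
    finally show ?thesis using X by linarith
  qed
  also have "\<dots> = (fact k1 * fact k2 * l1'^k1 * l2'^k2) * (\<Lambda>^(k1+k2) * M * 2^(N+1))"
    by (simp add: power_add algebra_simps)
  also have "\<dots> \<le> (fact k1 * fact k2 * l1'^k1 * l2'^k2) * (\<Lambda>^N * M * 2^(N+1))"
    using pN M D by (intro mult_left_mono mult_right_mono) auto
  finally have "cmod X / (fact k1 * fact k2 * l1'^k1 * l2'^k2) \<le> \<Lambda>^N * M * 2^(N+1)"
    using D by (simp add: pos_divide_le_eq mult.commute)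
  then show ?thesis by (simp add: mult_ac)
qed



lemma adm_facts:
  assumes adm: "admissible_L \<beta> l1 l2" and z: "(u,w) \<in> bidisc"
  shows "0 < l1 (u,w)" "0 < l2 (u,w)" "\<beta> < l1 (u,w) * (1 - cmod u)" "\<beta> < l2 (u,w) * (1 - cmod w)" "1 < \<beta>"
proof -
  have b: "1 < \<beta>" and all: "\<forall>z\<in>bidisc. l1 z > \<beta> / (1 - norm (fst z)) \<and> l2 z > \<beta> / (1 - norm (snd z))"
    using adm unfolding admissible_L_def by auto
  have h1: "l1 (u,w) > \<beta> / (1 - cmod u)" and h2: "l2 (u,w) > \<beta> / (1 - cmod w)"
    using bspec[OF all z] by auto
  have u: "0 < 1 - cmod u" and w: "0 < 1 - cmod w" using z by auto
  have "0 < \<beta> / (1 - cmod u)" using b u by simp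
  then show "0 < l1 (u,w)" using h1 by linarith
  have "0 < \<beta> / (1 - cmod w)" using b w by simp
  then show "0 < l2 (u,w)" using h2 by linarith
  show "\<beta> < l1 (u,w) * (1 - cmod u)" using h1 u by (simp add: pos_divide_less_eq)
  show "\<beta> < l2 (u,w) * (1 - cmod w)" using h2 w by (simp add: pos_divide_less_eq)
  show "1 < \<beta>" by fact
qed

lemma nterm_nonneg:
  assumes "0 < l1 z" "0 < l2 z"
  shows "0 \<le> nterm F l1 l2 p q z"
  unfolding nterm_def using assms by simp

lemma small_step:
  fixes L \<beta> c d :: real
  assumes "0 < L" "1 < \<beta>" "\<beta> < L * (1 - c)" "d \<le> 1 / (4 * L)"
  shows "d < 1 - c"
proof -
  have "1 < L * (1 - c)" using assms by linarith
  then have "1 / L < 1 - c" using assms(1) by (simp add: divide_less_eq mult.commute)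
  moreover have "1 / (4 * L) \<le> 1 / L" using assms(1) by (simp add: frac_le)
  ultimately show ?thesis using assms(4) by linarith
qed

lemma step_u:
  assumes adm: "admissible_L \<beta> l1 l2" and F: "analytic_bidisc F"
    and BI: "\<And>z p q. z \<in> bidisc \<Longrightarrow> nterm F l1 l2 p q z \<le> MaxN (\<lambda>k1 k2. nterm F l1 l2 k1 k2 z) N"
    and z: "(u,w) \<in> bidisc" and z': "(u',w) \<in> bidisc"
    and d: "cmod (u' - u) \<le> 1 / (4 * l1 (u,w))"
    and La: "1 \<le> \<Lambda>" and r1: "l1 (u,w) \<le> \<Lambda> * l1 (u',w)" and r2: "l2 (u,w) \<le> \<Lambda> * l2 (u',w)"
    and k: "k1 + k2 \<le> N"
  shows "nterm F l1 l2 k1 k2 (u',w) \<le> 2^(N+1) * \<Lambda>^N * MaxN (\<lambda>k1 k2. nterm F l1 l2 k1 k2 (u,w)) N"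
proof -
  define L1 where "L1 = l1 (u,w)"
  define L2 where "L2 = l2 (u,w)"
  define M where "M = MaxN (\<lambda>k1 k2. nterm F l1 l2 k1 k2 (u,w)) N"
  note af = adm_facts[OF adm z] and af' = adm_facts[OF adm z']
  have L1: "0 < L1" and L2: "0 < L2" using af by (auto simp: L1_def L2_def)
  have M0: "0 \<le> M"
  proof -
    have "nterm F l1 l2 0 0 (u,w) \<le> M" unfolding M_def by (rule maxN_ge) simp
    moreover have "0 \<le> nterm F l1 l2 0 0 (u,w)" by (rule nterm_nonneg) (use af in auto)
    ultimately show ?thesis by linarith
  qed
  have u0: "cmod u < 1" and w0: "cmod w < 1" using z by auto
  have dd: "cmod (u' - u) < 1 - cmod u"
    by (rule small_step[OF af(1) af(5) af(3) d])
  have S: "(\<lambda>j. pderiv2 F (k1+j) k2 (u,w) / fact j * (u' - u)^j) sums pderiv2 F k1 k2 (u',w)"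
    by (rule taylor_u[OF F u0 w0 dd])
  have bnd: "cmod (pderiv2 F (k1+j) k2 (u,w) / fact j * (u' - u)^j)
      \<le> fact (k1+j) / fact j * (fact k2 * L2^k2 * M) * L1^(k1+j) * cmod (u' - u)^j" for j
  proof -
    have "nterm F l1 l2 (k1+j) k2 (u,w) \<le> M" unfolding M_def by (rule BI[OF z])
    then have "cmod (pderiv2 F (k1+j) k2 (u,w)) \<le> M * (fact (k1+j) * fact k2 * L1^(k1+j) * L2^k2)"
      using L1 L2 by (simp add: nterm_def L1_def L2_def pos_divide_le_eq)
    then have "cmod (pderiv2 F (k1+j) k2 (u,w)) / fact j * cmod (u' - u)^j
        \<le> M * (fact (k1+j) * fact k2 * L1^(k1+j) * L2^k2) / fact j * cmod (u' - u)^j"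
      by (intro mult_right_mono divide_right_mono) auto
    also have "\<dots> = fact (k1+j) / fact j * (fact k2 * L2^k2 * M) * L1^(k1+j) * cmod (u' - u)^j"
      by (simp add: field_simps)
    finally show ?thesis by (simp add: norm_mult norm_divide norm_power)
  qed
  have 4: "4 * L1 * cmod (u' - u) \<le> 1" using d L1 by (simp add: L1_def field_simps)
  have "cmod (pderiv2 F k1 k2 (u',w)) \<le> fact k1 * (fact k2 * L2^k2 * M) * L1^k1 * 2^(k1+1)"
    by (rule taylor_bound[OF S bnd _ 4 L1]) (use L2 M0 in auto)
  also have "\<dots> \<le> fact k1 * fact k2 * L1^k1 * L2^k2 * M * 2^(N+1)"
  proof -
    have "(2::real)^(k1+1) \<le> 2^(N+1)" by (rule power_increasing) (use k in auto)
    moreover have "0 \<le> fact k1 * fact k2 * L1^k1 * L2^k2 * M" using L1 L2 M0 by simp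
    ultimately have "fact k1 * fact k2 * L1^k1 * L2^k2 * M * 2^(k1+1) \<le> fact k1 * fact k2 * L1^k1 * L2^k2 * M * 2^(N+1)"
      by (rule mult_left_mono)
    then show ?thesis by (simp add: mult_ac)
  qed
  finally have X: "cmod (pderiv2 F k1 k2 (u',w)) \<le> fact k1 * fact k2 * L1^k1 * L2^k2 * M * 2^(N+1)" .
  have "cmod (pderiv2 F k1 k2 (u',w)) / (fact k1 * fact k2 * l1 (u',w)^k1 * l2 (u',w)^k2) \<le> 2^(N+1) * \<Lambda>^N * M"
    by (rule step_core[OF X]) (use r1 r2 af' L1 L2 La k M0 in \<open>auto simp: L1_def L2_def\<close>)
  then show ?thesis by (simp add: nterm_def M_def)
qed

lemma step_w:
  assumes adm: "admissible_L \<beta> l1 l2" and F: "analytic_bidisc F"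
    and BI: "\<And>z p q. z \<in> bidisc \<Longrightarrow> nterm F l1 l2 p q z \<le> MaxN (\<lambda>k1 k2. nterm F l1 l2 k1 k2 z) N"
    and z: "(u,w) \<in> bidisc" and z': "(u,w') \<in> bidisc"
    and d: "cmod (w' - w) \<le> 1 / (4 * l2 (u,w))"
    and La: "1 \<le> \<Lambda>" and r1: "l1 (u,w) \<le> \<Lambda> * l1 (u,w')" and r2: "l2 (u,w) \<le> \<Lambda> * l2 (u,w')"
    and k: "k1 + k2 \<le> N"
  shows "nterm F l1 l2 k1 k2 (u,w') \<le> 2^(N+1) * \<Lambda>^N * MaxN (\<lambda>k1 k2. nterm F l1 l2 k1 k2 (u,w)) N"
proof -
  define L1 where "L1 = l1 (u,w)"
  define L2 where "L2 = l2 (u,w)"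
  define M where "M = MaxN (\<lambda>k1 k2. nterm F l1 l2 k1 k2 (u,w)) N"
  note af = adm_facts[OF adm z] and af' = adm_facts[OF adm z']
  have L1: "0 < L1" and L2: "0 < L2" using af by (auto simp: L1_def L2_def)
  have M0: "0 \<le> M"
  proof -
    have "nterm F l1 l2 0 0 (u,w) \<le> M" unfolding M_def by (rule maxN_ge) simp
    moreover have "0 \<le> nterm F l1 l2 0 0 (u,w)" by (rule nterm_nonneg) (use af in auto)
    ultimately show ?thesis by linarith
  qed
  have u0: "cmod u < 1" and w0: "cmod w < 1" using z by auto
  have dd: "cmod (w' - w) < 1 - cmod w"
    by (rule small_step[OF af(2) af(5) af(4) d])
  have S: "(\<lambda>j. pderiv2 F k1 (k2+j) (u,w) / fact j * (w' - w)^j) sums pderiv2 F k1 k2 (u,w')"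
    by (rule taylor_w[OF F u0 w0 dd])
  have bnd: "cmod (pderiv2 F k1 (k2+j) (u,w) / fact j * (w' - w)^j)
      \<le> fact (k2+j) / fact j * (fact k1 * L1^k1 * M) * L2^(k2+j) * cmod (w' - w)^j" for j
  proof -
    have "nterm F l1 l2 k1 (k2+j) (u,w) \<le> M" unfolding M_def by (rule BI[OF z])
    then have "cmod (pderiv2 F k1 (k2+j) (u,w)) \<le> M * (fact k1 * fact (k2+j) * L1^k1 * L2^(k2+j))"
      using L1 L2 by (simp add: nterm_def L1_def L2_def pos_divide_le_eq)
    then have "cmod (pderiv2 F k1 (k2+j) (u,w)) / fact j * cmod (w' - w)^j
        \<le> M * (fact k1 * fact (k2+j) * L1^k1 * L2^(k2+j)) / fact j * cmod (w' - w)^j"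
      by (intro mult_right_mono divide_right_mono) auto
    also have "\<dots> = fact (k2+j) / fact j * (fact k1 * L1^k1 * M) * L2^(k2+j) * cmod (w' - w)^j"
      by (simp add: field_simps)
    finally show ?thesis by (simp add: norm_mult norm_divide norm_power)
  qed
  have 4: "4 * L2 * cmod (w' - w) \<le> 1" using d L2 by (simp add: L2_def field_simps)
  have "cmod (pderiv2 F k1 k2 (u,w')) \<le> fact k2 * (fact k1 * L1^k1 * M) * L2^k2 * 2^(k2+1)"
    by (rule taylor_bound[OF S bnd _ 4 L2]) (use L1 M0 in auto)
  also have "\<dots> \<le> fact k1 * fact k2 * L1^k1 * L2^k2 * M * 2^(N+1)"
  proof -
    have "(2::real)^(k2+1) \<le> 2^(N+1)" by (rule power_increasing) (use k in auto)
    moreover have "0 \<le> fact k1 * fact k2 * L1^k1 * L2^k2 * M" using L1 L2 M0 by simp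
    ultimately have "fact k1 * fact k2 * L1^k1 * L2^k2 * M * 2^(k2+1) \<le> fact k1 * fact k2 * L1^k1 * L2^k2 * M * 2^(N+1)"
      by (rule mult_left_mono)
    then show ?thesis by (simp add: mult_ac)
  qed
  finally have X: "cmod (pderiv2 F k1 k2 (u,w')) \<le> fact k1 * fact k2 * L1^k1 * L2^k2 * M * 2^(N+1)" .
  have "cmod (pderiv2 F k1 k2 (u,w')) / (fact k1 * fact k2 * l1 (u,w')^k1 * l2 (u,w')^k2) \<le> 2^(N+1) * \<Lambda>^N * M"
    by (rule step_core[OF X]) (use r1 r2 af' L1 L2 La k M0 in \<open>auto simp: L1_def L2_def\<close>)
  then show ?thesis by (simp add: nterm_def M_def)
qed

lemma chain:
  fixes g :: "nat \<Rightarrow> real"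
  assumes "\<And>i. i < n \<Longrightarrow> g (Suc i) \<le> K * g i" "0 \<le> K"
  shows "g n \<le> K^n * g 0"
  using assms(1)
proof (induction n)
  case 0 then show ?case by simp
next
  case (Suc n)
  then have "g n \<le> K^n * g 0" by simp
  then have "K * g n \<le> K * (K^n * g 0)" using assms(2) by (rule mult_left_mono)
  moreover have "g (Suc n) \<le> K * g n" using Suc.prems by simp
  ultimately show ?case by simp
qed



lemma pderiv2_00: "pderiv2 F 0 0 z = F z"
  by (simp add: pderiv2_def)

lemma nterm_00: "nterm F l1 l2 0 0 z = cmod (F z)"
  by (simp add: nterm_def pderiv2_00)

lemma BI_MaxN: "bounded_L_index F l1 l2 \<longleftrightarrow>
   (\<exists>N. \<forall>z\<in>bidisc. \<forall>p q. nterm F l1 l2 p q z \<le> MaxN (\<lambda>k1 k2. nterm F l1 l2 k1 k2 z) N)"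
  by (simp add: bounded_L_index_def MaxN_def)

lemma bwd:
  assumes adm: "admissible_L \<beta> l1 l2" and F: "analytic_bidisc F"
    and R: "\<forall>r1 r2. 0 < r1 \<and> r1 \<le> \<beta> \<and> 0 < r2 \<and> r2 \<le> \<beta> \<longrightarrow>
      (\<exists>n0::nat. \<exists>p0::real. p0 > 0 \<and>
        (\<forall>z0\<in>bidisc. \<exists>k01 k02. k01 + k02 \<le> n0 \<and>
          (\<forall>k1 k2 z. k1 + k2 \<le> n0 \<and> z \<in> polydisc z0 (r1 / l1 z0, r2 / l2 z0) \<longrightarrow>
             nterm F l1 l2 k1 k2 z \<le>
               p0 / (fact k01 * fact k02) *
               (norm (pderiv2 F k01 k02 z0) / (l1 z0 ^ k01 * l2 z0 ^ k02)))))"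
  shows "bounded_L_index F l1 l2"
proof -
  have b: "1 < \<beta>" using adm by (simp add: admissible_L_def)
  obtain n0 p0 where p0: "p0 > 0" and H: "\<forall>z0\<in>bidisc. \<exists>k01 k02. k01 + k02 \<le> n0 \<and>
          (\<forall>k1 k2 z. k1 + k2 \<le> n0 \<and> z \<in> polydisc z0 (\<beta> / l1 z0, \<beta> / l2 z0) \<longrightarrow>
             nterm F l1 l2 k1 k2 z \<le>
               p0 / (fact k01 * fact k02) *
               (norm (pderiv2 F k01 k02 z0) / (l1 z0 ^ k01 * l2 z0 ^ k02)))"
    using R[rule_format, of \<beta> \<beta>] b by auto
  obtain N1 where N1: "p0 < \<beta>^N1" using real_arch_pow[OF b] by blast
  define N where "N = max N1 n0"
  have pN: "p0 \<le> \<beta>^N"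
  proof -
    have "\<beta>^N1 \<le> \<beta>^N" by (rule power_increasing) (use b in \<open>auto simp: N_def\<close>)
    then show ?thesis using N1 by linarith
  qed
  show ?thesis unfolding BI_MaxN
  proof (intro exI ballI allI)
    fix z p q assume z: "z \<in> bidisc"
    obtain a b0 where zab: "z = (a, b0)" by fastforce
    have zb: "(a,b0) \<in> bidisc" using z zab by simp
    note af = adm_facts[OF adm zb]
    show "nterm F l1 l2 p q z \<le> MaxN (\<lambda>k1 k2. nterm F l1 l2 k1 k2 z) N"
    proof (cases "p + q \<le> N")
      case True then show ?thesis by (rule maxN_ge)
    next
      case False
      obtain k01 k02 where k0: "k01 + k02 \<le> n0" and Hk: "\<And>k1 k2 z'. k1 + k2 \<le> n0 \<Longrightarrow> z' \<in> polydisc z (\<beta> / l1 z, \<beta> / l2 z) \<Longrightarrow>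
             nterm F l1 l2 k1 k2 z' \<le> p0 / (fact k01 * fact k02) *
               (norm (pderiv2 F k01 k02 z) / (l1 z ^ k01 * l2 z ^ k02))"
        using H z by blast
      define V where "V = p0 / (fact k01 * fact k02) * (norm (pderiv2 F k01 k02 z) / (l1 z ^ k01 * l2 z ^ k02))"
      have Vn: "V = p0 * nterm F l1 l2 k01 k02 z" by (simp add: V_def nterm_def field_simps)
      define \<rho>1 where "\<rho>1 = \<beta> / l1 z"
      define \<rho>2 where "\<rho>2 = \<beta> / l2 z"
      have r1: "0 < \<rho>1" using af b by (simp add: \<rho>1_def zab)
      have r2: "0 < \<rho>2" using af b by (simp add: \<rho>2_def zab)
      have r1l: "\<rho>1 < 1 - cmod a" using af by (simp add: \<rho>1_def zab pos_divide_less_eq mult.commute)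
      have r2l: "\<rho>2 < 1 - cmod b0" using af by (simp add: \<rho>2_def zab pos_divide_less_eq mult.commute)
      have cb1: "cball a \<rho>1 \<subseteq> ball 0 1"
      proof
        fix x assume "x \<in> cball a \<rho>1"
        then have "cmod (x - a) \<le> \<rho>1" by (simp add: dist_norm norm_minus_commute)
        moreover have "cmod x \<le> cmod a + cmod (x - a)" by (metis add.commute diff_add_cancel norm_triangle_ineq)
        ultimately show "x \<in> ball 0 1" using r1l by simp
      qed
      have cb2: "cball b0 \<rho>2 \<subseteq> ball 0 1"
      proof
        fix x assume "x \<in> cball b0 \<rho>2"
        then have "cmod (x - b0) \<le> \<rho>2" by (simp add: dist_norm norm_minus_commute)
        moreover have "cmod x \<le> cmod b0 + cmod (x - b0)" by (metis add.commute diff_add_cancel norm_triangle_ineq)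
        ultimately show "x \<in> ball 0 1" using r2l by simp
      qed
      have Vb: "cmod (F (\<xi>, \<eta>)) \<le> V" if "cmod (\<xi> - a) = \<rho>1" "cmod (\<eta> - b0) = \<rho>2" for \<xi> \<eta>
      proof -
        have "(\<xi>, \<eta>) \<in> polydisc z (\<beta> / l1 z, \<beta> / l2 z)"
          using that by (simp add: polydisc_def zab \<rho>1_def \<rho>2_def)
        then have "nterm F l1 l2 0 0 (\<xi>, \<eta>) \<le> V" unfolding V_def by (intro Hk) auto
        then show ?thesis by (simp add: nterm_00)
      qed
      have C: "cmod (pderiv2 F p q (a,b0)) \<le> fact p * fact q * V / (\<rho>1^p * \<rho>2^q)"
        by (rule cauchy2[OF F r1 cb1 r2 cb2 Vb])
      have l1p: "0 < l1 z" and l2p: "0 < l2 z" using af zab by auto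
      have "nterm F l1 l2 p q z = cmod (pderiv2 F p q (a,b0)) / (fact p * fact q * l1 z ^ p * l2 z ^ q)"
        by (simp add: nterm_def zab)
      also have "\<dots> \<le> fact p * fact q * V / (\<rho>1^p * \<rho>2^q) / (fact p * fact q * l1 z ^ p * l2 z ^ q)"
        by (rule divide_right_mono[OF C]) (use l1p l2p in simp)
      also have "\<dots> = V / \<beta>^(p+q)"
      proof -
        have "\<rho>1^p * l1 z ^ p = \<beta>^p" using l1p by (simp add: \<rho>1_def power_divide)
        moreover have "\<rho>2^q * l2 z ^ q = \<beta>^q" using l2p by (simp add: \<rho>2_def power_divide)
        ultimately show ?thesis using l1p l2p r1 r2
          by (simp add: power_add field_simps)
      qed
      also have "\<dots> \<le> V / p0"
      proof -
        have "\<beta>^N \<le> \<beta>^(p+q)" by (rule power_increasing) (use False b in auto)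
        then have "p0 \<le> \<beta>^(p+q)" using pN by linarith
        moreover have "0 \<le> V" unfolding Vn using p0 nterm_nonneg[of l1 z l2 F k01 k02, OF l1p l2p] by simp
        ultimately show ?thesis using p0 by (intro divide_left_mono) auto
      qed
      also have "\<dots> = nterm F l1 l2 k01 k02 z" using p0 by (simp add: Vn)
      also have "\<dots> \<le> MaxN (\<lambda>k1 k2. nterm F l1 l2 k1 k2 z) N"
        by (rule maxN_ge) (use k0 in \<open>simp add: N_def\<close>)
      finally show ?thesis .
    qed
  qed
qed



lemma dstep:
  fixes D R L L0 C mm :: real
  assumes D: "D \<le> R / L0" and L0: "0 < L0" and L: "0 < L" and LC: "L \<le> C * L0"
    and m: "4 * C * R \<le> mm" and mm: "0 < mm"
  shows "D / mm \<le> 1 / (4 * L)"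
proof -
  have C: "0 < C" using L LC L0 by (metis less_le_trans mult_pos_pos zero_less_mult_pos2 mult.commute)
  have "D / mm \<le> (R / L0) / mm" by (rule divide_right_mono[OF D]) (use mm in simp)
  also have "\<dots> \<le> 1 / (4 * C * L0)"
  proof -
    have "L0 * (4 * C * R) \<le> L0 * mm" using m L0 by (intro mult_left_mono) auto
    then show ?thesis using L0 mm C by (simp add: divide_simps mult_ac)
  qed
  also have "\<dots> \<le> 1 / (4 * L)"
    using LC L C L0 by (intro divide_left_mono) (auto simp: mult.assoc)
  finally show ?thesis .
qed

lemma fwd:
  assumes adm: "admissible_L \<beta> l1 l2" and Q: "Q2 \<beta> l1 l2" and F: "analytic_bidisc F"
    and BI: "bounded_L_index F l1 l2"
  shows "\<forall>r1 r2. 0 < r1 \<and> r1 \<le> \<beta> \<and> 0 < r2 \<and> r2 \<le> \<beta> \<longrightarrow>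
      (\<exists>n0::nat. \<exists>p0::real. p0 > 0 \<and>
        (\<forall>z0\<in>bidisc. \<exists>k01 k02. k01 + k02 \<le> n0 \<and>
          (\<forall>k1 k2 z. k1 + k2 \<le> n0 \<and> z \<in> polydisc z0 (r1 / l1 z0, r2 / l2 z0) \<longrightarrow>
             nterm F l1 l2 k1 k2 z \<le>
               p0 / (fact k01 * fact k02) *
               (norm (pderiv2 F k01 k02 z0) / (l1 z0 ^ k01 * l2 z0 ^ k02)))))"
proof (intro allI impI)
  fix r1 r2 :: real
  assume r: "0 < r1 \<and> r1 \<le> \<beta> \<and> 0 < r2 \<and> r2 \<le> \<beta>"
  obtain N where BIN: "\<forall>z\<in>bidisc. \<forall>p q. nterm F l1 l2 p q z \<le> MaxN (\<lambda>k1 k2. nterm F l1 l2 k1 k2 z) N"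
    using BI unfolding BI_MaxN by blast
  have BIr: "\<And>z p q. z \<in> bidisc \<Longrightarrow> nterm F l1 l2 p q z \<le> MaxN (\<lambda>k1 k2. nterm F l1 l2 k1 k2 z) N"
    using BIN by blast
  define P where "P = (\<lambda>z0. polydisc z0 (r1 / l1 z0, r2 / l2 z0))"
  have Q': "\<forall>l \<in> {l1, l2}.
          (\<exists>c>0. \<forall>z0\<in>bidisc. \<forall>z\<in>bidisc \<inter> P z0. c \<le> l z / l z0) \<and>
          (\<exists>C. \<forall>z0\<in>bidisc. \<forall>z\<in>bidisc \<inter> P z0. l z / l z0 \<le> C)"
    using Q r unfolding Q2_def P_def by auto
  have Ql1: "(\<exists>c>0. \<forall>z0\<in>bidisc. \<forall>z\<in>bidisc \<inter> P z0. c \<le> l1 z / l1 z0) \<and>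
          (\<exists>C. \<forall>z0\<in>bidisc. \<forall>z\<in>bidisc \<inter> P z0. l1 z / l1 z0 \<le> C)" using Q' by blast
  have Ql2: "(\<exists>c>0. \<forall>z0\<in>bidisc. \<forall>z\<in>bidisc \<inter> P z0. c \<le> l2 z / l2 z0) \<and>
          (\<exists>C. \<forall>z0\<in>bidisc. \<forall>z\<in>bidisc \<inter> P z0. l2 z / l2 z0 \<le> C)" using Q' by blast
  obtain c1 where c1a: "c1 > 0" and c1b: "\<forall>z0\<in>bidisc. \<forall>z\<in>bidisc \<inter> P z0. c1 \<le> l1 z / l1 z0"
    using Ql1 by blast
  obtain C1 where C1a: "\<forall>z0\<in>bidisc. \<forall>z\<in>bidisc \<inter> P z0. l1 z / l1 z0 \<le> C1"
    using Ql1 by blast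
  obtain c2 where c2a: "c2 > 0" and c2b: "\<forall>z0\<in>bidisc. \<forall>z\<in>bidisc \<inter> P z0. c2 \<le> l2 z / l2 z0"
    using Ql2 by blast
  obtain C2 where C2a: "\<forall>z0\<in>bidisc. \<forall>z\<in>bidisc \<inter> P z0. l2 z / l2 z0 \<le> C2"
    using Ql2 by blast
  have c1: "c1 > 0" "\<And>z0 z. z0 \<in> bidisc \<Longrightarrow> z \<in> bidisc \<Longrightarrow> z \<in> P z0 \<Longrightarrow> c1 \<le> l1 z / l1 z0"
    using c1a c1b by blast+
  have C1: "\<And>z0 z. z0 \<in> bidisc \<Longrightarrow> z \<in> bidisc \<Longrightarrow> z \<in> P z0 \<Longrightarrow> l1 z / l1 z0 \<le> C1"
    using C1a by blast
  have c2: "c2 > 0" "\<And>z0 z. z0 \<in> bidisc \<Longrightarrow> z \<in> bidisc \<Longrightarrow> z \<in> P z0 \<Longrightarrow> c2 \<le> l2 z / l2 z0"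
    using c2a c2b by blast+
  have C2: "\<And>z0 z. z0 \<in> bidisc \<Longrightarrow> z \<in> bidisc \<Longrightarrow> z \<in> P z0 \<Longrightarrow> l2 z / l2 z0 \<le> C2"
    using C2a by blast
  have Psub: "z \<in> bidisc" if z0: "z0 \<in> bidisc" and z: "z \<in> P z0" for z0 z
  proof -
    obtain a b where ab: "z0 = (a,b)" by fastforce
    obtain x y where xy: "z = (x,y)" by fastforce
    note af = adm_facts[OF adm z0[unfolded ab]]
    have "r1 / l1 (a,b) < 1 - cmod a"
    proof -
      have "r1 < l1 (a,b) * (1 - cmod a)" using af r by linarith
      then show ?thesis using af by (simp add: pos_divide_less_eq mult.commute)
    qed
    moreover have "r2 / l2 (a,b) < 1 - cmod b"
    proof -
      have "r2 < l2 (a,b) * (1 - cmod b)" using af r by linarith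
      then show ?thesis using af by (simp add: pos_divide_less_eq mult.commute)
    qed
    moreover have "cmod (x - a) \<le> r1 / l1 (a,b)" "cmod (y - b) \<le> r2 / l2 (a,b)"
      using z by (auto simp: P_def polydisc_def ab xy)
    moreover have "cmod x \<le> cmod a + cmod (x - a)" by (metis add.commute diff_add_cancel norm_triangle_ineq)
    moreover have "cmod y \<le> cmod b + cmod (y - b)" by (metis add.commute diff_add_cancel norm_triangle_ineq)
    ultimately show ?thesis by (simp add: xy)
  qed
  have self: "z0 \<in> P z0" if "z0 \<in> bidisc" for z0
  proof -
    obtain a b where ab: "z0 = (a,b)" by fastforce
    note af = adm_facts[OF adm that[unfolded ab]]
    show ?thesis using af r by (simp add: P_def polydisc_def ab)
  qed
  have lpos1: "0 < l1 z" and lpos2: "0 < l2 z" if "z \<in> bidisc" for z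
  proof -
    obtain a b where ab: "z = (a,b)" by fastforce
    show "0 < l1 z" "0 < l2 z" using adm_facts[OF adm that[unfolded ab]] ab by auto
  qed
  have lb1: "c1 * l1 z0 \<le> l1 z" and ub1: "l1 z \<le> C1 * l1 z0"
   and lb2: "c2 * l2 z0 \<le> l2 z" and ub2: "l2 z \<le> C2 * l2 z0"
    if "z0 \<in> bidisc" "z \<in> P z0" for z0 z
  proof -
    have zb: "z \<in> bidisc" by (rule Psub[OF that])
    show "c1 * l1 z0 \<le> l1 z" using c1(2)[OF that(1) zb that(2)] lpos1[OF that(1)] by (simp add: pos_le_divide_eq)
    show "l1 z \<le> C1 * l1 z0" using C1[OF that(1) zb that(2)] lpos1[OF that(1)] by (simp add: pos_divide_le_eq)
    show "c2 * l2 z0 \<le> l2 z" using c2(2)[OF that(1) zb that(2)] lpos2[OF that(1)] by (simp add: pos_le_divide_eq)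
    show "l2 z \<le> C2 * l2 z0" using C2[OF that(1) zb that(2)] lpos2[OF that(1)] by (simp add: pos_divide_le_eq)
  qed
  have zz: "(0,0) \<in> bidisc" by simp
  have C1g: "1 \<le> C1" using ub1[OF zz self[OF zz]] lpos1[OF zz] by simp
  have C2g: "1 \<le> C2" using ub2[OF zz self[OF zz]] lpos2[OF zz] by simp
  have c1l: "c1 \<le> 1" using lb1[OF zz self[OF zz]] lpos1[OF zz] by simp
  have c2l: "c2 \<le> 1" using lb2[OF zz self[OF zz]] lpos2[OF zz] by simp
  define \<Lambda> where "\<Lambda> = max (C1 / c1) (C2 / c2)"
  have La: "1 \<le> \<Lambda>"
  proof -
    have "1 \<le> C1 / c1" using C1g c1l c1(1) by (simp add: pos_le_divide_eq)
    then show ?thesis by (simp add: \<Lambda>_def)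
  qed
  have RR1: "l1 z \<le> \<Lambda> * l1 z'" if "z0 \<in> bidisc" "z \<in> P z0" "z' \<in> P z0" for z0 z z'
  proof -
    have "l1 z \<le> C1 * l1 z0" by (rule ub1[OF that(1,2)])
    also have "\<dots> = (C1 / c1) * (c1 * l1 z0)" using c1(1) by simp
    also have "\<dots> \<le> (C1 / c1) * l1 z'"
      using lb1[OF that(1,3)] C1g c1(1) by (intro mult_left_mono) auto
    also have "\<dots> \<le> \<Lambda> * l1 z'"
      using lpos1[OF Psub[OF that(1,3)]] by (intro mult_right_mono) (auto simp: \<Lambda>_def)
    finally show ?thesis .
  qed
  have RR2: "l2 z \<le> \<Lambda> * l2 z'" if "z0 \<in> bidisc" "z \<in> P z0" "z' \<in> P z0" for z0 z z'
  proof -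
    have "l2 z \<le> C2 * l2 z0" by (rule ub2[OF that(1,2)])
    also have "\<dots> = (C2 / c2) * (c2 * l2 z0)" using c2(1) by simp
    also have "\<dots> \<le> (C2 / c2) * l2 z'"
      using lb2[OF that(1,3)] C2g c2(1) by (intro mult_left_mono) auto
    also have "\<dots> \<le> \<Lambda> * l2 z'"
      using lpos2[OF Psub[OF that(1,3)]] by (intro mult_right_mono) (auto simp: \<Lambda>_def)
    finally show ?thesis .
  qed
  define m :: nat where "m = nat \<lceil>4 * C1 * r1 + 4 * C2 * r2\<rceil> + 1"
  have m0: "0 < m" by (simp add: m_def)
  have mge: "4 * C1 * r1 + 4 * C2 * r2 \<le> real m"
    unfolding m_def by linarith
  have m1: "4 * C1 * r1 \<le> real m" using mge C2g r by (smt (verit) mult_pos_pos)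
  have m2: "4 * C2 * r2 \<le> real m" using mge C1g r by (smt (verit) mult_pos_pos)
  define K :: real where "K = 2^(N+1) * \<Lambda>^N"
  have K0: "0 < K" using La by (simp add: K_def)
  define Mf where "Mf = (\<lambda>z. MaxN (\<lambda>k1 k2. nterm F l1 l2 k1 k2 z) N)"
  show "\<exists>n0::nat. \<exists>p0::real. p0 > 0 \<and>
        (\<forall>z0\<in>bidisc. \<exists>k01 k02. k01 + k02 \<le> n0 \<and>
          (\<forall>k1 k2 z. k1 + k2 \<le> n0 \<and> z \<in> polydisc z0 (r1 / l1 z0, r2 / l2 z0) \<longrightarrow>
             nterm F l1 l2 k1 k2 z \<le>
               p0 / (fact k01 * fact k02) *
               (norm (pderiv2 F k01 k02 z0) / (l1 z0 ^ k01 * l2 z0 ^ k02))))"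
  proof (rule exI[of _ N], rule exI[of _ "K^(2*m)"], intro conjI ballI)
    show "0 < K^(2*m)" using K0 by simp
    fix z0 assume z0: "z0 \<in> bidisc"
    obtain k01 k02 where k0: "k01 + k02 \<le> N" and Mz0: "Mf z0 = nterm F l1 l2 k01 k02 z0"
      using maxN_in unfolding Mf_def by blast
    have key: "Mf z \<le> K^(2*m) * Mf z0" if zP: "z \<in> P z0" for z
    proof -
      obtain a b where ab: "z0 = (a,b)" by fastforce
      obtain x y where xy: "z = (x,y)" by fastforce
      have nx: "cmod (x - a) \<le> r1 / l1 z0" and ny: "cmod (y - b) \<le> r2 / l2 z0"
        using zP by (auto simp: P_def polydisc_def ab xy)
      define pu where "pu = (\<lambda>i::nat. (a + of_nat i / of_nat m * (x - a), b))"
      define pw where "pw = (\<lambda>i::nat. (x, b + of_nat i / of_nat m * (y - b)))"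
      have fr: "cmod (of_nat i / of_nat m * v) \<le> cmod v" if "i \<le> m" for i and v :: complex
      proof -
        have "cmod (of_nat i / of_nat m * v) = (real i / real m) * cmod v"
          by (simp add: norm_mult norm_divide)
        also have "\<dots> \<le> 1 * cmod v" using that m0 by (intro mult_right_mono) auto
        finally show ?thesis by simp
      qed
      have puP: "pu i \<in> P z0" if "i \<le> m" for i
        using fr[OF that, of "x - a"] nx ab self[OF z0]
        by (auto simp: P_def polydisc_def pu_def)
      have pwP: "pw i \<in> P z0" if "i \<le> m" for i
        using fr[OF that, of "y - b"] ny nx ab
        by (auto simp: P_def polydisc_def pw_def)
      have diff: "v + of_nat (Suc i) / of_nat m * t - (v + of_nat i / of_nat m * t) = t / of_nat m"
        for v t :: complex and i
        using m0 by (simp add: field_simps)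
      have l0: "0 < l1 z0" "0 < l2 z0" using lpos1[OF z0] lpos2[OF z0] by auto
      have stu: "Mf (pu (Suc i)) \<le> K * Mf (pu i)" if i: "i < m" for i
      proof -
        have P1: "pu i \<in> P z0" and P2: "pu (Suc i) \<in> P z0" using puP i by auto
        have B1: "pu i \<in> bidisc" and B2: "pu (Suc i) \<in> bidisc" using Psub[OF z0] P1 P2 by auto
        obtain k1 k2 where k: "k1 + k2 \<le> N" and Mk: "Mf (pu (Suc i)) = nterm F l1 l2 k1 k2 (pu (Suc i))"
          using maxN_in unfolding Mf_def by blast
        have d: "cmod (fst (pu (Suc i)) - fst (pu i)) \<le> 1 / (4 * l1 (pu i))"
        proof -
          have "cmod (fst (pu (Suc i)) - fst (pu i)) = cmod (x - a) / real m"
            by (simp only: pu_def fst_conv diff) (simp add: norm_divide)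
          also have "\<dots> \<le> 1 / (4 * l1 (pu i))"
            by (rule dstep[OF nx l0(1) lpos1[OF B1] ub1[OF z0 P1] m1]) (use m0 in simp)
          finally show ?thesis .
        qed
        have "nterm F l1 l2 k1 k2 (fst (pu (Suc i)), b) \<le> 2^(N+1) * \<Lambda>^N * MaxN (\<lambda>k1 k2. nterm F l1 l2 k1 k2 (fst (pu i), b)) N"
          by (rule step_u[OF adm F BIr _ _ _ La _ _ k]) (use B1 B2 d RR1[OF z0 P1 P2] RR2[OF z0 P1 P2] in \<open>simp_all add: pu_def\<close>)
        then show ?thesis using Mk by (simp add: Mf_def K_def pu_def)
      qed
      have stw: "Mf (pw (Suc i)) \<le> K * Mf (pw i)" if i: "i < m" for i
      proof -
        have P1: "pw i \<in> P z0" and P2: "pw (Suc i) \<in> P z0" using pwP i by auto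
        have B1: "pw i \<in> bidisc" and B2: "pw (Suc i) \<in> bidisc" using Psub[OF z0] P1 P2 by auto
        obtain k1 k2 where k: "k1 + k2 \<le> N" and Mk: "Mf (pw (Suc i)) = nterm F l1 l2 k1 k2 (pw (Suc i))"
          using maxN_in unfolding Mf_def by blast
        have d: "cmod (snd (pw (Suc i)) - snd (pw i)) \<le> 1 / (4 * l2 (pw i))"
        proof -
          have "cmod (snd (pw (Suc i)) - snd (pw i)) = cmod (y - b) / real m"
            by (simp only: pw_def snd_conv diff) (simp add: norm_divide)
          also have "\<dots> \<le> 1 / (4 * l2 (pw i))"
            by (rule dstep[OF ny l0(2) lpos2[OF B1] ub2[OF z0 P1] m2]) (use m0 in simp)
          finally show ?thesis .
        qed
        have "nterm F l1 l2 k1 k2 (x, snd (pw (Suc i))) \<le> 2^(N+1) * \<Lambda>^N * MaxN (\<lambda>k1 k2. nterm F l1 l2 k1 k2 (x, snd (pw i))) N"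
          by (rule step_w[OF adm F BIr _ _ _ La _ _ k]) (use B1 B2 d RR1[OF z0 P1 P2] RR2[OF z0 P1 P2] in \<open>simp_all add: pw_def\<close>)
        then show ?thesis using Mk by (simp add: Mf_def K_def pw_def)
      qed
      have c1': "Mf (pu m) \<le> K^m * Mf (pu 0)"
        by (rule chain[where g = "\<lambda>i. Mf (pu i)", OF stu]) (use K0 in auto)
      have c2': "Mf (pw m) \<le> K^m * Mf (pw 0)"
        by (rule chain[where g = "\<lambda>i. Mf (pw i)", OF stw]) (use K0 in auto)
      have e1: "pu 0 = z0" by (simp add: pu_def ab)
      have e2: "pw 0 = pu m" using m0 by (simp add: pu_def pw_def)
      have e3: "pw m = z" using m0 by (simp add: pw_def xy)
      have "Mf z \<le> K^m * Mf (pu m)" using c2' e2 e3 by simp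
      also have "\<dots> \<le> K^m * (K^m * Mf z0)"
        using c1' e1 K0 by (intro mult_left_mono) auto
      also have "\<dots> = K^(2*m) * Mf z0" by (simp add: power_add mult_2 mult.assoc)
      finally show ?thesis .
    qed
    have main: "\<forall>k1 k2 z. k1 + k2 \<le> N \<and> z \<in> polydisc z0 (r1 / l1 z0, r2 / l2 z0) \<longrightarrow>
             nterm F l1 l2 k1 k2 z \<le>
               K^(2*m) / (fact k01 * fact k02) *
               (norm (pderiv2 F k01 k02 z0) / (l1 z0 ^ k01 * l2 z0 ^ k02))"
    proof (intro allI impI)
      fix k1 k2 z assume h: "k1 + k2 \<le> N \<and> z \<in> polydisc z0 (r1 / l1 z0, r2 / l2 z0)"
      have "nterm F l1 l2 k1 k2 z \<le> Mf z" unfolding Mf_def by (rule maxN_ge) (use h in simp)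
      also have "\<dots> \<le> K^(2*m) * Mf z0" by (rule key) (use h in \<open>simp add: P_def\<close>)
      also have "\<dots> = K^(2*m) / (fact k01 * fact k02) *
               (norm (pderiv2 F k01 k02 z0) / (l1 z0 ^ k01 * l2 z0 ^ k02))"
        unfolding Mz0 nterm_def by (simp add: divide_divide_eq_left mult.assoc)
      finally show "nterm F l1 l2 k1 k2 z \<le> K^(2*m) / (fact k01 * fact k02) *
               (norm (pderiv2 F k01 k02 z0) / (l1 z0 ^ k01 * l2 z0 ^ k02))" .
    qed
    show "\<exists>k01 k02. k01 + k02 \<le> N \<and>
          (\<forall>k1 k2 z. k1 + k2 \<le> N \<and> z \<in> polydisc z0 (r1 / l1 z0, r2 / l2 z0) \<longrightarrow>
             nterm F l1 l2 k1 k2 z \<le>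
               K^(2*m) / (fact k01 * fact k02) *
               (norm (pderiv2 F k01 k02 z0) / (l1 z0 ^ k01 * l2 z0 ^ k02)))"
      using k0 main by blast
  qed
qed


theorem theorem1:
  fixes \<beta> :: real
    and l1 l2 :: "complex \<times> complex \<Rightarrow> real"
    and F :: "complex \<times> complex \<Rightarrow> complex"
  assumes "admissible_L \<beta> l1 l2"
    and "Q2 \<beta> l1 l2"
    and "analytic_bidisc F"
  shows "bounded_L_index F l1 l2 \<longleftrightarrow>
    (\<forall>r1 r2. 0 < r1 \<and> r1 \<le> \<beta> \<and> 0 < r2 \<and> r2 \<le> \<beta> \<longrightarrow>
      (\<exists>n0::nat. \<exists>p0::real. p0 > 0 \<and>
        (\<forall>z0\<in>bidisc. \<exists>k01 k02. k01 + k02 \<le> n0 \<and>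
          (\<forall>k1 k2 z. k1 + k2 \<le> n0 \<and> z \<in> polydisc z0 (r1 / l1 z0, r2 / l2 z0) \<longrightarrow>
             nterm F l1 l2 k1 k2 z \<le>
               p0 / (fact k01 * fact k02) *
               (norm (pderiv2 F k01 k02 z0) / (l1 z0 ^ k01 * l2 z0 ^ k02))))))"
  by (rule iffI[OF fwd[OF assms] bwd[OF assms(1,3)]])

end
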